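(* Let $d,n\ge1$, $k\ge0$, and $\Sigma\in\mathbb{R}^{d\times d}$ positive definite. Let $x^{(1)},\dots,x^{(n+1)}$ be i.i.d. $\mathcal{N}(0,\Sigma)$, $w_\star\sim\mathcal{N}(0,\Sigma^{-1})$ independent, and $y^{(i)}=\langle x^{(i)},w_\star\rangle$ for $i\le n$. Let $$Z_0=\begin{bmatrix} x^{(1)} & \cdots & x^{(n)} & x^{(n+1)}\\ y^{(1)} & \cdots & y^{(n)} & 0\end{bmatrix},\qquad M=\begin{bmatrix} I_n & 0\\ 0& 0\end{bmatrix}\in\mathbb{R}^{(n+1)\times(n+1)}.$$ For $A=\{A_i\}_{i=0}^k$ with $A_i\in\mathbb{R}^{d\times d}$ symmetric, let $P_i=\begin{bmatrix}0_{d\times d}&0\\0&1\end{bmatrix}$, $Q_i=\begin{bmatrix}A_i&0\\0&0\end{bmatrix}$, $Z_{i+1}=Z_i+\frac1nP_iZ_iM(Z_i^\top Q_iZ_i)$ for $i=0,\dots,k$, and $f(A)=\mathbb{E}\big[([Z_{k+1}]_{d+1,n+1}+w_\star^\top x^{(n+1)})^2\big]$. Suppose $A_i=a_i\Sigma^{-1}$ with $a_i\in\mathbb{R}$ for all $i$. Let $i,j\in\{0,\dots,k\}$ and define $\tilde A$ by $\tilde A_i=A_j$, $\tilde A_j=A_i$, and $\tilde A_\ell=A_\ell$ for $\ell\notin\{i,j\}$. Then $f(A)=f(\tilde A)$.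
   Context: $[X]_{i,j}$ denotes the $(i,j)$ entry of a matrix; the expectation is over $x^{(1)},\dots,x^{(n+1)},w_\star$. *)

theory Defs
  imports "HOL-Analysis.Analysis" "HOL-Probability.Probability"
begin

text \<open>The data dimension d is CARD('d) (vectors in real^'d); the number of
 in-context samples n is CARD('n). The (d+1) rows of Z are indexed by 'd option, where
 Some a is the a-th data coordinate and None is the last row d+1. The (n+1) columns of Z are
 indexed by 'n option, where Some m is one of the n context samples and None is the query
 column n+1. Thus the entry [Z]_{d+1,n+1} is Z $ None $ None.\<close>

definition pos_def_matrix :: "real^'d^'d \<Rightarrow> bool" where
  "pos_def_matrix S \<longleftrightarrow> transpose S = S \<and> (\<forall>x::real^'d. x \<noteq> 0 \<longrightarrow> x \<bullet> (S *v x) > 0)"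

definition gauss_density :: "real^'d^'d \<Rightarrow> real^'d \<Rightarrow> real" where
  "gauss_density S x =
     exp (- (x \<bullet> (matrix_inv S *v x)) / 2) / sqrt ((2 * pi) ^ CARD('d) * det S)"

definition gauss :: "real^'d^'d \<Rightarrow> (real^'d) measure" where
  "gauss S = density lborel (\<lambda>x. ennreal (gauss_density S x))"

definition joint_law :: "real^'d^'d \<Rightarrow> (('n::finite option \<Rightarrow> real^'d) \<times> (real^'d)) measure" where
  "joint_law S = (PiM UNIV (\<lambda>_. gauss S)) \<Otimes>\<^sub>M gauss (matrix_inv S)"

definition Z0 :: "('n::finite option \<Rightarrow> real^'d) \<Rightarrow> real^'d \<Rightarrow> real^('n option)^('d option)" where
  "Z0 X w = (\<chi> r c. case r of
                Some a \<Rightarrow> X c $ a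
              | None \<Rightarrow> (case c of Some _ \<Rightarrow> X c \<bullet> w | None \<Rightarrow> 0))"

definition Mmat :: "real^('n::finite option)^('n option)" where
  "Mmat = (\<chi> r c. if r = c \<and> r \<noteq> None then 1 else 0)"

definition Pmat :: "real^('d::finite option)^('d option)" where
  "Pmat = (\<chi> r c. if r = None \<and> c = None then 1 else 0)"

definition Qmat :: "real^'d^'d \<Rightarrow> real^('d::finite option)^('d option)" where
  "Qmat B = (\<chi> r c. case (r, c) of (Some a, Some b) \<Rightarrow> B $ a $ b | _ \<Rightarrow> 0)"

definition Zstep :: "real^'d^'d \<Rightarrow> real^('n::finite option)^('d::finite option)
                     \<Rightarrow> real^('n option)^('d option)" where
  "Zstep B Z = Z + (1 / real CARD('n)) *\<^sub>R
      (Pmat ** Z ** Mmat ** (transpose Z ** Qmat B ** Z))"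

fun Zseq :: "(nat \<Rightarrow> real^'d^'d) \<Rightarrow> ('n::finite option \<Rightarrow> real^'d) \<Rightarrow> real^'d
             \<Rightarrow> nat \<Rightarrow> real^('n option)^('d::finite option)" where
  "Zseq A X w 0 = Z0 X w"
| "Zseq A X w (Suc i) = Zstep (A i) (Zseq A X w i)"

text \<open>f(A) for layers A_0..A_k (k+1 layers), with covariance S; the type 'n fixes n.\<close>
definition f_obj :: "real^'d^'d \<Rightarrow> nat \<Rightarrow> (nat \<Rightarrow> real^'d^'d) \<Rightarrow> 'n::finite itself \<Rightarrow> real" where
  "f_obj S k A (_ :: 'n itself) =
     (\<integral>p. (Zseq A (fst p :: 'n option \<Rightarrow> real^'d) (snd p) (Suc k) $ None $ None
            + snd p \<bullet> fst p None)\<^sup>2 \<partial>(joint_law S :: (('n option \<Rightarrow> real^'d) \<times> (real^'d)) measure))"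

end

theory Submission
  imports Defs
begin

lemma sum_option_UNIV:
  "(\<Sum>x\<in>(UNIV::'a::finite option set). f x) = f None + (\<Sum>a\<in>UNIV. f (Some a))"
  by (simp add: UNIV_option_conv sum.reindex)

lemma Qmat_None_col: "Qmat B $ r $ None = 0"
  by (simp add: Qmat_def split: option.splits)

lemma Qmat_None_row: "Qmat B $ None $ c = 0"
  by (simp add: Qmat_def split: option.splits)

lemma QZ_top:
  fixes Z1 Z2 :: "real^('n::finite option)^('d::finite option)"
  assumes "\<forall>a. Z1 $ Some a = Z2 $ Some a"
  shows "transpose Z1 ** Qmat B ** Z1 = transpose Z2 ** Qmat B ** Z2"
proof -
  have 1: "Qmat B ** Z1 = Qmat B ** Z2"
    by (simp add: vec_eq_iff matrix_matrix_mult_def sum_option_UNIV Qmat_None_col assms)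
  have 2: "(Qmat B ** Z2) $ None = 0"
    by (simp add: vec_eq_iff matrix_matrix_mult_def Qmat_None_row)
  have 3: "transpose Z1 ** W = transpose Z2 ** W" if "W $ None = 0" for W :: "real^'m^('d option)"
    using that by (simp add: vec_eq_iff matrix_matrix_mult_def sum_option_UNIV transpose_def assms)
  show ?thesis
    unfolding matrix_mul_assoc[symmetric] 1 using 3[OF 2] .
qed

lemma matrix_add_rdistrib': "((B + C) ** A) = (B ** A) + (C ** A)"
  by (vector matrix_matrix_mult_def sum.distrib[symmetric] field_simps)

lemma Pmat_top: "(Pmat ** W) $ Some a = 0"
  by (simp add: vec_eq_iff matrix_matrix_mult_def Pmat_def)

lemma Pmat_idem: "Pmat ** (Pmat ** W) = Pmat ** W"
  by (simp add: vec_eq_iff matrix_matrix_mult_def Pmat_def sum_option_UNIV)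

definition GG :: "real^'d^'d \<Rightarrow> real^('n::finite option)^('d::finite option) \<Rightarrow> real^('n option)^('n option)" where
  "GG B Z = Mmat ** (transpose Z ** Qmat B ** Z)"

lemma Qmat_scale: "Qmat (c *\<^sub>R B) = c *\<^sub>R Qmat B"
  by (simp add: vec_eq_iff Qmat_def split: option.splits)

lemma Zstep_form:
  "Zstep (c *\<^sub>R B) Z = Z + (c / real CARD('n)) *\<^sub>R (Pmat ** (Z ** GG B Z))"
  for Z :: "real^('n::finite option)^('d::finite option)"
  by (simp add: Zstep_def GG_def Qmat_scale matrix_scalar_ac scalar_matrix_assoc
      matrix_mul_assoc)

lemma GG_upd:
  fixes Z :: "real^('n::finite option)^('d::finite option)"
  shows "GG B (Z + e *\<^sub>R (Pmat ** W)) = GG B Z"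
  unfolding GG_def
  by (subst QZ_top[where ?Z2.0 = Z]) (auto simp: Pmat_top)

lemma Zstep_comm:
  fixes Z :: "real^('n::finite option)^('d::finite option)"
  shows "Zstep (c *\<^sub>R B) (Zstep (d *\<^sub>R B) Z) = Zstep (d *\<^sub>R B) (Zstep (c *\<^sub>R B) Z)"
proof -
  let ?G = "GG B Z"
  let ?n = "real CARD('n)"
  have e: "Zstep (c *\<^sub>R B) (Zstep (d *\<^sub>R B) Z) =
     Z + (d / ?n) *\<^sub>R (Pmat ** (Z ** ?G)) + (c / ?n) *\<^sub>R (Pmat ** (Z ** ?G))
       + ((c / ?n) * (d / ?n)) *\<^sub>R (Pmat ** (Z ** ?G ** ?G))"
    for c d
  proof -
    have g: "GG B (Z + (d / ?n) *\<^sub>R (Pmat ** (Z ** ?G))) = ?G" by (rule GG_upd)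
    have p: "Pmat ** ((Z + (d / ?n) *\<^sub>R (Pmat ** (Z ** ?G))) ** ?G)
       = Pmat ** (Z ** ?G) + (d / ?n) *\<^sub>R (Pmat ** (Z ** ?G ** ?G))"
      by (simp add: matrix_add_rdistrib' matrix_add_ldistrib matrix_scalar_ac
          scalar_matrix_assoc[symmetric] matrix_mul_assoc Pmat_idem[unfolded matrix_mul_assoc])
    show ?thesis
      unfolding Zstep_form[of d] Zstep_form[of c] g p
      by (simp add: scaleR_add_right algebra_simps)
  qed
  show ?thesis unfolding e by (simp add: algebra_simps)
qed

lemma Zseq_fold: "Zseq A X w m = fold (\<lambda>l. Zstep (A l)) [0..<m] (Z0 X w)"
  by (induction m) auto

theorem lemma4:
  fixes S :: "real^'d^'d" and k :: nat and A :: "nat \<Rightarrow> real^'d^'d" and a :: "nat \<Rightarrow> real"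
    and i j :: nat
  assumes "pos_def_matrix S"
    and "\<forall>l\<le>k. A l = a l *\<^sub>R matrix_inv S"
    and "i \<le> k" and "j \<le> k"
  shows "f_obj S k A TYPE('n::finite)
       = f_obj S k (\<lambda>l. if l = i then A j else if l = j then A i else A l) TYPE('n)"
proof -
  define \<sigma> where "\<sigma> = (\<lambda>l::nat. if l = i then j else if l = j then i else l)"
  have A': "(\<lambda>l. if l = i then A j else if l = j then A i else A l) = (\<lambda>l. A (\<sigma> l))"
    by (auto simp: \<sigma>_def)
  have inj: "inj \<sigma>" by (auto simp: inj_def \<sigma>_def split: if_splits)
  have ms: "mset [0..<Suc k] = mset (map \<sigma> [0..<Suc k])"
  proof (subst set_eq_iff_mset_eq_distinct[symmetric])
    show "distinct (map \<sigma> [0..<Suc k])" unfolding distinct_map using inj inj_on_subset by (metis distinct_upt subset_UNIV)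
    show "set [0..<Suc k] = set (map \<sigma> [0..<Suc k])"
      using assms(3,4) by (auto simp: \<sigma>_def image_iff)
  qed simp
  have key: "Zseq A X w (Suc k) = Zseq (\<lambda>l. A (\<sigma> l)) X w (Suc k)"
    for X :: "'n option \<Rightarrow> real^'d" and w
  proof -
    have "fold (\<lambda>l. Zstep (A l)) [0..<Suc k] = fold (\<lambda>l. Zstep (A l)) (map \<sigma> [0..<Suc k])"
    proof (rule fold_multiset_equiv[OF _ ms])
      fix x y assume "x \<in> set [0..<Suc k]" "y \<in> set [0..<Suc k]"
      then have "A x = a x *\<^sub>R matrix_inv S" "A y = a y *\<^sub>R matrix_inv S"
        using assms(2) by auto
      then show "Zstep (A x) \<circ> Zstep (A y) = Zstep (A y) \<circ> Zstep (A x)"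
        by (simp add: fun_eq_iff Zstep_comm)
    qed
    then show ?thesis unfolding Zseq_fold fold_map comp_def by (rule fun_cong)
  qed
  show ?thesis unfolding A' f_obj_def key ..
qed

end
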